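(* Fix an episode $\ell$ and two random functions $Q_1, Q_2 \in \mathbb{R}^{\mathcal{X}\times\mathcal{A}}$. Suppose that, conditioned on $\mathcal{H}_{\ell-1}$, for each $i = 1,2$ the entries $Q_i(x,a)$ are independent across $(x,a)$ and independent of the RLSVI noise terms $w_\ell(t,x,a)$. If \[ Q_1(x,a)\mid\mathcal{H}_{\ell-1} \succeq_{SO} Q_2(x,a)\mid\mathcal{H}_{\ell-1} \qquad \forall (x,a)\in\mathcal{X}\times\mathcal{A}, \] then \[ F_{\ell,t}Q_1(x,a)\mid\mathcal{H}_{\ell-1} \succeq_{SO} F_{\ell,t}Q_2(x,a)\mid\mathcal{H}_{\ell-1} \qquad \forall (x,a)\in\mathcal{X}\times\mathcal{A},\ t\in\{0,\dots,H-1\}. \]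
   Context: Stochastic optimism: $X \succeq_{SO} Y$ if $\mathbb{E}[u(X)]\ge\mathbb{E}[u(Y)]$ for every convex increasing $u:\mathbb{R}\to\mathbb{R}$; "$\mid \mathcal{H}_{\ell-1}$" means the comparison holds for the conditional distributions given $\mathcal{H}_{\ell-1}$. Setting: episodic finite-horizon MDP with finite state set $\mathcal{X}$, finite action set $\mathcal{A}$, horizon $H$; in episode $k$ and period $t\in\{0,\dots,H-1\}$ the agent is in state $x^k_t$, takes action $a^k_t$, and observes outcome $(r^k_{t+1},x^k_{t+1})\in\{0,1\}\times\mathcal{X}$. $\mathcal{H}_{\ell-1}$ is the history of all observations in episodes $1,\dots,\ell-1$. $D_{\ell-1}(t,x,a)$ is the multiset of outcomes $(r^k_{t+1},x^k_{t+1})$ over $k<\ell$ with $x^k_t=x$, $a^k_t=a$, and $n_\ell(t,x,a)$ its size. RLSVI Bellman operator with parameters $\bar\theta$, $v>0$, $\lambda>0$: $\sigma^2_\ell(t,x,a) = (1/\lambda + n_\ell(t,x,a)/v)^{-1}$; $w_\ell(t,x,a)$ is, conditionally on $\mathcal{H}_{\ell-1}$, $N(0,\sigma^2_\ell(t,x,a))$, with $w_\ell(t,x,a)/\sigma_\ell(t,x,a)$ i.i.d. standard normal across $\ell$ and $(t,x,a)$; and \[F_{\ell,t}Q(x,a) = \sigma^2_\ell(t,x,a)\Big(\frac{\bar\theta_{t,x,a}}{\lambda} + \frac1v\sum_{(r,x')\in D_{\ell-1}(t,x,a)}\big(r+\max_{a'\in\mathcal{A}}Q(x',a')\big)\Big)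 + w_\ell(t,x,a).\] *)

theory Defs
  imports "HOL-Probability.Probability"
begin

text \<open>Extended expectation of a real random variable, with values in ereal:
  E[f] = int^+ f^+ - int^+ f^-.  (Only used for u(X) with X integrable and u convex
  increasing, where the negative part has finite integral.)\<close>
definition ext_expect :: "'w measure \<Rightarrow> ('w \<Rightarrow> real) \<Rightarrow> ereal" where
  "ext_expect M f =
     enn2ereal (\<integral>\<^sup>+ \<omega>. ennreal (f \<omega>) \<partial>M) - enn2ereal (\<integral>\<^sup>+ \<omega>. ennreal (- f \<omega>) \<partial>M)"

definition stoch_opt :: "'w measure \<Rightarrow> ('w \<Rightarrow> real) \<Rightarrow> ('w \<Rightarrow> real) \<Rightarrow> bool" where
  "stoch_opt M X Y \<longleftrightarrow>
     X \<in> borel_measurable M \<and> Y \<in> borel_measurable M \<and> integrable M X \<and> integrable M Y \<and>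
     (\<forall>u :: real \<Rightarrow> real. convex_on UNIV u \<and> mono u \<longrightarrow>
         ext_expect M (u \<circ> X) \<ge> ext_expect M (u \<circ> Y))"

text \<open>Data D_{l-1}(t,x,a): multiset of outcomes (r^k_{t+1}, x^k_{t+1}) over episodes
  1 <= k < l with x^k_t = x and a^k_t = a.  hx k t = x^k_t, ha k t = a^k_t, hr k t = r^k_t.\<close>
definition hist_data ::
  "(nat \<Rightarrow> nat \<Rightarrow> 'x) \<Rightarrow> (nat \<Rightarrow> nat \<Rightarrow> 'a) \<Rightarrow> (nat \<Rightarrow> nat \<Rightarrow> real) \<Rightarrow> nat
     \<Rightarrow> nat \<Rightarrow> 'x \<Rightarrow> 'a \<Rightarrow> (real \<times> 'x) multiset" where
  "hist_data hx ha hr l t x a =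
     mset (map (\<lambda>k. (hr k (Suc t), hx k (Suc t))) (filter (\<lambda>k. hx k t = x \<and> ha k t = a) [1..<l]))"

definition rlsvi_sigma2 :: "real \<Rightarrow> real \<Rightarrow> nat \<Rightarrow> real" where
  "rlsvi_sigma2 lam v n = inverse (1 / lam + real n / v)"

definition rlsvi_F ::
  "real \<Rightarrow> real \<Rightarrow> (nat \<Rightarrow> 'x \<Rightarrow> 'a::finite \<Rightarrow> real) \<Rightarrow> (nat \<Rightarrow> 'x \<Rightarrow> 'a \<Rightarrow> (real \<times> 'x) multiset)
     \<Rightarrow> (nat \<Rightarrow> 'x \<Rightarrow> 'a \<Rightarrow> real) \<Rightarrow> nat \<Rightarrow> ('x \<Rightarrow> 'a \<Rightarrow> real) \<Rightarrow> 'x \<Rightarrow> 'a \<Rightarrow> real" where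
  "rlsvi_F lam v th D wv t Q x a =
     rlsvi_sigma2 lam v (size (D t x a)) *
       (th t x a / lam + (1 / v) * sum_mset (image_mset (\<lambda>(r, x'). r + Max (range (Q x'))) (D t x a)))
     + wv t x a"

end

theory Submission
  imports Defs
begin
lemma ext_expect_distr:
  assumes T: "T \<in> measurable M N" and h: "h \<in> borel_measurable N"
  shows "ext_expect (distr M N T) h = ext_expect M (h \<circ> T)"
  unfolding ext_expect_def using T h
  by (subst (1 2) nn_integral_distr) (auto simp: comp_def)

lemma ennreal_transfer1:
  fixes a b c d :: ennreal
  assumes "enn2ereal a - enn2ereal b \<le> enn2ereal c - enn2ereal d" "b < top" "d < top"
  shows "a + d \<le> c + b"
proof -
  obtain rb where rb: "b = ennreal rb" "rb \<ge> 0" using assms(2) by (cases b) auto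
  obtain rd where rd: "d = ennreal rd" "rd \<ge> 0" using assms(3) by (cases d) auto
  show ?thesis
  proof (cases a)
    case ra: (real ra)
    show ?thesis
    proof (cases c)
      case rc: (real rc)
      have "ereal ra - ereal rb \<le> ereal rc - ereal rd" using assms(1) rb rd ra rc
        by (simp add: enn2ereal_ennreal)
      then have "ra + rd \<le> rc + rb" by simp
      then show ?thesis using rb rd ra rc
        by (simp add: ennreal_plus[symmetric] ennreal_leI del: ennreal_plus)
    next
      case top
      then show ?thesis by simp
    qed
  next
    case top
    then have "enn2ereal c - ereal rd = \<infinity>" using assms(1) rb rd by auto
    then show ?thesis using rd by (cases c) (auto simp: enn2ereal_ennreal)
  qed
qed

lemma ennreal_transfer2:
  fixes a b c d :: ennreal
  assumes "a + d \<le> c + b" "b < top" "d < top"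
  shows "enn2ereal a - enn2ereal b \<le> enn2ereal c - enn2ereal d"
proof -
  obtain rb where rb: "b = ennreal rb" "rb \<ge> 0" using assms(2) by (cases b) auto
  obtain rd where rd: "d = ennreal rd" "rd \<ge> 0" using assms(3) by (cases d) auto
  show ?thesis
  proof (cases c)
    case rc: (real rc)
    show ?thesis
    proof (cases a)
      case ra: (real ra)
      have "ennreal (ra + rd) \<le> ennreal (rc + rb)" using assms(1) rb rd ra rc
        by (simp add: ennreal_plus)
      then have "ra + rd \<le> rc + rb" using rb rd ra rc ennreal_le_iff[of "rc+rb" "ra+rd"] by simp
      then show ?thesis using rb rd ra rc by (simp add: enn2ereal_ennreal)
    next
      case top
      then show ?thesis using assms(1) rb rd rc by (simp add: ennreal_plus[symmetric] top_unique del: ennreal_plus)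
    qed
  next
    case top
    then show ?thesis using rb rd by simp
  qed
qed

lemma convex_mono_lower:
  fixes u :: "real \<Rightarrow> real"
  assumes cu: "convex_on UNIV u" and mu: "mono u"
  shows "-(\<bar>u (-1)\<bar> + \<bar>u 0\<bar> + (u 0 - u (-1)) * \<bar>s\<bar>) \<le> u s"
proof (cases "s \<ge> -1")
  case True
  then have "u (-1) \<le> u s" using mu by (simp add: monoD)
  moreover have "u (-1) \<le> u 0" using mu by (simp add: monoD)
  ultimately show ?thesis by (smt (verit) abs_ge_zero mult_nonneg_nonneg)
next
  case False
  define th where "th = (s + 1) / s"
  have s0: "s < -1" using False by simp
  have th0: "0 \<le> th" "th \<le> 1" using s0 by (auto simp: th_def field_simps)
  have eq: "(1 - th) *\<^sub>R s + th *\<^sub>R 0 = -1" using s0 by (simp add: th_def field_simps)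
  have "u (-1) \<le> (1 - th) * u s + th * u 0"
    using convex_onD[OF cu th0, of s 0] eq by simp
  then have "(-s) * u (-1) \<le> (-s) * ((1 - th) * u s + th * u 0)"
    using s0 by (intro mult_left_mono) auto
  also have "(-s) * ((1 - th) * u s + th * u 0) = u s + (-s - 1) * u 0"
    using s0 by (simp add: th_def field_simps)
  finally have "u (-1) * (-s) \<le> u s + (-s - 1) * u 0" by (simp add: mult.commute)
  then have "u s \<ge> u 0 - (u 0 - u (-1)) * \<bar>s\<bar>"
    using s0 by (simp add: algebra_simps)
  moreover have "u (-1) \<le> u 0" using mu by (simp add: monoD)
  ultimately show ?thesis by (smt (verit) abs_ge_zero mult_nonneg_nonneg)
qed

lemma convex_Max_range:
  fixes \<phi> :: "'b::finite \<Rightarrow> real \<Rightarrow> real"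
  assumes "\<And>b. convex_on UNIV (\<phi> b)"
  shows "convex_on UNIV (\<lambda>y. Max (range (\<lambda>b. \<phi> b y)))"
proof (rule convex_onI)
  fix t :: real and x y :: real assume t: "0 < t" "t < 1"
  show "Max (range (\<lambda>b. \<phi> b ((1 - t) *\<^sub>R x + t *\<^sub>R y)))
        \<le> (1 - t) * Max (range (\<lambda>b. \<phi> b x)) + t * Max (range (\<lambda>b. \<phi> b y))"
  proof (rule Max.boundedI)
    show "finite (range (\<lambda>b. \<phi> b ((1 - t) *\<^sub>R x + t *\<^sub>R y)))" by simp
    show "range (\<lambda>b. \<phi> b ((1 - t) *\<^sub>R x + t *\<^sub>R y)) \<noteq> {}" by simp
    fix z assume "z \<in> range (\<lambda>b. \<phi> b ((1 - t) *\<^sub>R x + t *\<^sub>R y))"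
    then obtain b where z: "z = \<phi> b ((1 - t) *\<^sub>R x + t *\<^sub>R y)" by auto
    have "z \<le> (1 - t) * \<phi> b x + t * \<phi> b y"
      using convex_onD[OF assms[of b], of t x y] t z by simp
    also have "\<dots> \<le> (1 - t) * Max (range (\<lambda>b. \<phi> b x)) + t * Max (range (\<lambda>b. \<phi> b y))"
      using t by (intro add_mono mult_left_mono Max_ge) auto
    finally show "z \<le> \<dots>" .
  qed
qed simp

lemma mono_Max_range:
  fixes \<phi> :: "'b::finite \<Rightarrow> real \<Rightarrow> real"
  assumes "\<And>b. mono (\<phi> b)"
  shows "mono (\<lambda>y. Max (range (\<lambda>b. \<phi> b y)))"
proof (rule monoI)
  fix x y :: real assume xy: "x \<le> y"
  show "Max (range (\<lambda>b. \<phi> b x)) \<le> Max (range (\<lambda>b. \<phi> b y))"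
  proof (rule Max.boundedI)
    fix z assume "z \<in> range (\<lambda>b. \<phi> b x)"
    then obtain b where z: "z = \<phi> b x" by auto
    have "z \<le> \<phi> b y" using z assms[of b] xy by (simp add: monoD)
    also have "\<dots> \<le> Max (range (\<lambda>b. \<phi> b y))" by (intro Max_ge) auto
    finally show "z \<le> \<dots>" .
  qed auto
qed

lemma convex_mono_comp:
  fixes u g :: "real \<Rightarrow> real"
  assumes "convex_on UNIV u" "mono u" "convex_on UNIV g" "mono g"
  shows "convex_on UNIV (u \<circ> g)" "mono (u \<circ> g)"
proof -
  show "mono (u \<circ> g)" using assms by (simp add: mono_def)
  show "convex_on UNIV (u \<circ> g)"
  proof (rule convex_onI)
    fix t :: real and x y :: real assume t: "0 < t" "t < 1"
    have "g ((1 - t) *\<^sub>R x + t *\<^sub>R y) \<le> (1 - t) * g x + t * g y"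
      using convex_onD[OF assms(3), of t x y] t by simp
    then have "u (g ((1 - t) *\<^sub>R x + t *\<^sub>R y)) \<le> u ((1 - t) *\<^sub>R g x + t *\<^sub>R g y)"
      using assms(2) by (simp add: monoD)
    also have "\<dots> \<le> (1 - t) * u (g x) + t * u (g y)"
      using convex_onD[OF assms(1), of t "g x" "g y"] t by simp
    finally show "(u \<circ> g) ((1 - t) *\<^sub>R x + t *\<^sub>R y) \<le> (1 - t) * (u \<circ> g) x + t * (u \<circ> g) y" by simp
  qed simp
qed

lemma fm_cong:
  assumes "f \<in> borel_measurable (PiM J (\<lambda>_. borel))" "\<And>k. sets (A k) = sets borel"
  shows "f \<in> borel_measurable (PiM J A)"
proof -
  have s: "sets (PiM J A) = sets (PiM J (\<lambda>_. borel))" by (rule sets_PiM_cong) (auto simp: assms(2))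
  show ?thesis by (subst measurable_cong_sets[OF s refl]) (rule assms(1))
qed

lemma integrable_component:
  assumes "\<And>k. prob_space (A k)" "\<And>k. sets (A k) = sets borel" "k \<in> J"
    "integrable (A k) (\<lambda>y. y)"
  shows "integrable (PiM J A) (\<lambda>z. z k :: real)"
proof -
  have m: "(\<lambda>z. z k) \<in> measurable (PiM J A) (A k)" using assms(3) by simp
  have "integrable (distr (PiM J A) (A k) (\<lambda>z. z k)) (\<lambda>y. y)"
    using assms by (subst distr_PiM_component) auto
  from integrable_distr[OF m this] show ?thesis .
qed

lemma neg_finite:
  fixes f :: "('i \<Rightarrow> real) \<Rightarrow> real"
  assumes J: "finite J" and pA: "\<And>k. prob_space (A k)" and sA: "\<And>k. sets (A k) = sets borel"
    and iA: "\<And>k. k \<in> J \<Longrightarrow> integrable (A k) (\<lambda>y. y)"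
    and fm: "f \<in> borel_measurable (PiM J (\<lambda>_. borel))"
    and fb: "\<And>z. -(C + K * (\<Sum>k\<in>J. \<bar>z k\<bar>)) \<le> f z" and K: "K \<ge> 0"
  shows "(\<integral>\<^sup>+z. ennreal (- f z) \<partial>PiM J A) < \<top>"
proof -
  interpret P: prob_space "PiM J A" by (rule prob_space_PiM) (simp add: pA)
  have int: "integrable (PiM J A) (\<lambda>z. \<bar>C\<bar> + K * (\<Sum>k\<in>J. \<bar>z k\<bar>))"
  proof -
    have "integrable (PiM J A) (\<lambda>z. \<bar>z k\<bar>)" if "k \<in> J" for k
      using integrable_component[of A, OF pA sA that iA[OF that]] by (rule integrable_abs)
    then have "integrable (PiM J A) (\<lambda>z. (\<Sum>k\<in>J. \<bar>z k\<bar>))"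
      using Bochner_Integration.integrable_sum[where I=J and f="\<lambda>k (z::'i\<Rightarrow>real). \<bar>z k\<bar>"] by blast
    then show ?thesis by (intro Bochner_Integration.integrable_add integrable_mult_right) simp_all
  qed
  have "(\<integral>\<^sup>+z. ennreal (- f z) \<partial>PiM J A) \<le> (\<integral>\<^sup>+z. ennreal (norm (\<bar>C\<bar> + K * (\<Sum>k\<in>J. \<bar>z k\<bar>))) \<partial>PiM J A)"
  proof (rule nn_integral_mono)
    fix z
    have "- f z \<le> \<bar>C\<bar> + K * (\<Sum>k\<in>J. \<bar>z k\<bar>)" using fb[of z] by simp
    moreover have "0 \<le> K * (\<Sum>k\<in>J. \<bar>z k\<bar>)" using K by (simp add: sum_nonneg)
    ultimately show "ennreal (- f z) \<le> ennreal (norm (\<bar>C\<bar> + K * (\<Sum>k\<in>J. \<bar>z k\<bar>)))"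
      by (intro ennreal_leI) simp
  qed
  also have "\<dots> < \<infinity>" using int by (simp add: integrable_iff_bounded)
  finally show ?thesis by simp
qed

lemma inner_finite:
  fixes f :: "('i \<Rightarrow> real) \<Rightarrow> real"
  assumes pA: "prob_space P" and iA: "integrable P (\<lambda>y. y)"
    and J: "finite J" "i \<in> J"
    and fb: "\<And>z. -(C + K * (\<Sum>k\<in>J. \<bar>z k\<bar>)) \<le> f z" and K: "K \<ge> 0"
  shows "(\<integral>\<^sup>+y. ennreal (- f (x(i:=y))) \<partial>P) < \<top>"
proof -
  interpret P: prob_space P by fact
  define c where "c = \<bar>C\<bar> + K * (\<Sum>k\<in>J-{i}. \<bar>x k\<bar>)"
  have c0: "c \<ge> 0" using K by (simp add: c_def sum_nonneg)
  have int: "integrable P (\<lambda>y. c + K * \<bar>y\<bar>)"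
    using iA by (intro Bochner_Integration.integrable_add integrable_mult_right integrable_abs) simp_all
  have "(\<integral>\<^sup>+y. ennreal (- f (x(i:=y))) \<partial>P) \<le> (\<integral>\<^sup>+y. ennreal (norm (c + K * \<bar>y\<bar>)) \<partial>P)"
  proof (rule nn_integral_mono)
    fix y
    have "(\<Sum>k\<in>J. \<bar>(x(i:=y)) k\<bar>) = \<bar>y\<bar> + (\<Sum>k\<in>J-{i}. \<bar>x k\<bar>)"
      using J by (simp add: sum.remove[of J i])
    then have "- f (x(i:=y)) \<le> c + K * \<bar>y\<bar>" using fb[of "x(i:=y)"] by (simp add: c_def algebra_simps)
    moreover have "0 \<le> K * \<bar>y\<bar>" using K by simp
    ultimately show "ennreal (- f (x(i:=y))) \<le> ennreal (norm (c + K * \<bar>y\<bar>))"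
      using c0 by (intro ennreal_leI) simp
  qed
  also have "\<dots> < \<infinity>" using int by (simp add: integrable_iff_bounded)
  finally show ?thesis by simp
qed

lemma icx_step:
  fixes A B :: "'i \<Rightarrow> real measure" and f :: "('i \<Rightarrow> real) \<Rightarrow> real"
  assumes J: "finite J" "i \<in> J"
    and pA: "\<And>k. prob_space (A k)" and sA: "\<And>k. sets (A k) = sets borel"
    and pB: "\<And>k. prob_space (B k)" and sB: "\<And>k. sets (B k) = sets borel"
    and eqAB: "\<And>k. k \<noteq> i \<Longrightarrow> A k = B k"
    and iA: "\<And>k. k \<in> J \<Longrightarrow> integrable (A k) (\<lambda>y. y)"
    and iB: "\<And>k. k \<in> J \<Longrightarrow> integrable (B k) (\<lambda>y. y)"
    and icx: "\<And>h. convex_on UNIV h \<Longrightarrow> mono h \<Longrightarrow> ext_expect (B i) h \<le> ext_expect (A i) h"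
    and fm: "f \<in> borel_measurable (PiM J (\<lambda>_. borel))"
    and fc: "\<And>z. convex_on UNIV (\<lambda>y. f (z(i:=y)))" "\<And>z. mono (\<lambda>y. f (z(i:=y)))"
    and fb: "\<And>z. -(C + K * (\<Sum>k\<in>J. \<bar>z k\<bar>)) \<le> f z" and K: "K \<ge> 0"
  shows "ext_expect (PiM J B) f \<le> ext_expect (PiM J A) f"
proof -
  define I' where "I' = J - {i}"
  have Jeq: "J = insert i I'" and I'f: "finite I'" and iI': "i \<notin> I'" using J by (auto simp: I'_def)
  interpret A: product_sigma_finite A
    unfolding product_sigma_finite_def by (simp add: pA prob_space_imp_sigma_finite)
  interpret B: product_sigma_finite B
    unfolding product_sigma_finite_def by (simp add: pB prob_space_imp_sigma_finite)
  have PI': "PiM I' B = PiM I' A" by (rule PiM_cong) (auto simp: I'_def eqAB)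
  have fA: "f \<in> borel_measurable (PiM (insert i I') A)" using fm_cong[OF fm sA] Jeq by simp
  have fB: "f \<in> borel_measurable (PiM (insert i I') B)" using fm_cong[OF fm sB] Jeq by simp
  have fA': "(\<lambda>z. ennreal (f z)) \<in> borel_measurable (PiM (insert i I') A)"
      "(\<lambda>z. ennreal (- f z)) \<in> borel_measurable (PiM (insert i I') A)" using fA by auto
  have fB': "(\<lambda>z. ennreal (f z)) \<in> borel_measurable (PiM (insert i I') B)"
      "(\<lambda>z. ennreal (- f z)) \<in> borel_measurable (PiM (insert i I') B)" using fB by auto
  define pa where "pa x = (\<integral>\<^sup>+y. ennreal (f (x(i:=y))) \<partial>A i)" for x
  define na where "na x = (\<integral>\<^sup>+y. ennreal (- f (x(i:=y))) \<partial>A i)" for x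
  define pb where "pb x = (\<integral>\<^sup>+y. ennreal (f (x(i:=y))) \<partial>B i)" for x
  define nb where "nb x = (\<integral>\<^sup>+y. ennreal (- f (x(i:=y))) \<partial>B i)" for x
  have PA: "(\<integral>\<^sup>+z. ennreal (f z) \<partial>PiM J A) = (\<integral>\<^sup>+x. pa x \<partial>PiM I' A)"
    unfolding Jeq pa_def by (rule A.product_nn_integral_insert[OF I'f iI' fA'(1)])
  have NA: "(\<integral>\<^sup>+z. ennreal (- f z) \<partial>PiM J A) = (\<integral>\<^sup>+x. na x \<partial>PiM I' A)"
    unfolding Jeq na_def by (rule A.product_nn_integral_insert[OF I'f iI' fA'(2)])
  have PB: "(\<integral>\<^sup>+z. ennreal (f z) \<partial>PiM J B) = (\<integral>\<^sup>+x. pb x \<partial>PiM I' A)"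
    unfolding Jeq pb_def PI'[symmetric] by (rule B.product_nn_integral_insert[OF I'f iI' fB'(1)])
  have NB: "(\<integral>\<^sup>+z. ennreal (- f z) \<partial>PiM J B) = (\<integral>\<^sup>+x. nb x \<partial>PiM I' A)"
    unfolding Jeq nb_def PI'[symmetric] by (rule B.product_nn_integral_insert[OF I'f iI' fB'(2)])
  have mA: "(\<lambda>(x, y). g (x(i := y))) \<in> borel_measurable (PiM I' A \<Otimes>\<^sub>M A i)"
    if "g \<in> borel_measurable (PiM (insert i I') A)" for g :: "_ \<Rightarrow> ennreal"
    using measurable_comp[OF measurable_add_dim that] by (simp add: comp_def case_prod_beta)
  have mB: "(\<lambda>(x, y). g (x(i := y))) \<in> borel_measurable (PiM I' A \<Otimes>\<^sub>M B i)"
    if "g \<in> borel_measurable (PiM (insert i I') B)" for g :: "_ \<Rightarrow> ennreal"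
    using measurable_comp[OF measurable_add_dim that] PI' by (simp add: comp_def case_prod_beta)
  have sfA: "sigma_finite_measure (A i)" and sfB: "sigma_finite_measure (B i)"
    by (simp_all add: pA pB prob_space_imp_sigma_finite)
  have mpA: "pa \<in> borel_measurable (PiM I' A)"
    unfolding pa_def using sigma_finite_measure.borel_measurable_nn_integral[OF sfA mA[OF fA'(1)]] by simp
  have mnA: "na \<in> borel_measurable (PiM I' A)"
    unfolding na_def using sigma_finite_measure.borel_measurable_nn_integral[OF sfA mA[OF fA'(2)]] by simp
  have mpB: "pb \<in> borel_measurable (PiM I' A)"
    unfolding pb_def using sigma_finite_measure.borel_measurable_nn_integral[OF sfB mB[OF fB'(1)]] by simp
  have mnB: "nb \<in> borel_measurable (PiM I' A)"
    unfolding nb_def using sigma_finite_measure.borel_measurable_nn_integral[OF sfB mB[OF fB'(2)]] by simp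
  have pw: "pb x + na x \<le> pa x + nb x" for x
  proof (rule ennreal_transfer1)
    show "na x < \<top>" unfolding na_def by (rule inner_finite[OF pA iA[OF J(2)] J fb K])
    show "nb x < \<top>" unfolding nb_def by (rule inner_finite[OF pB iB[OF J(2)] J fb K])
    show "enn2ereal (pb x) - enn2ereal (nb x) \<le> enn2ereal (pa x) - enn2ereal (na x)"
      using icx[OF fc(1)[of x] fc(2)[of x]] unfolding ext_expect_def pa_def na_def pb_def nb_def .
  qed
  have "(\<integral>\<^sup>+x. pb x \<partial>PiM I' A) + (\<integral>\<^sup>+x. na x \<partial>PiM I' A) = (\<integral>\<^sup>+x. pb x + na x \<partial>PiM I' A)"
    using mpB mnA by (simp add: nn_integral_add)
  also have "\<dots> \<le> (\<integral>\<^sup>+x. pa x + nb x \<partial>PiM I' A)" using pw by (intro nn_integral_mono) simp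
  also have "\<dots> = (\<integral>\<^sup>+x. pa x \<partial>PiM I' A) + (\<integral>\<^sup>+x. nb x \<partial>PiM I' A)"
    using mpA mnB by (simp add: nn_integral_add)
  finally have tot: "(\<integral>\<^sup>+z. ennreal (f z) \<partial>PiM J B) + (\<integral>\<^sup>+z. ennreal (- f z) \<partial>PiM J A)
     \<le> (\<integral>\<^sup>+z. ennreal (f z) \<partial>PiM J A) + (\<integral>\<^sup>+z. ennreal (- f z) \<partial>PiM J B)"
    unfolding PA NA PB NB .
  show ?thesis unfolding ext_expect_def
    by (rule ennreal_transfer2[OF tot neg_finite[OF J(1) pB sB iB fm fb K] neg_finite[OF J(1) pA sA iA fm fb K]])
qed

lemma icx_product:
  fixes \<mu> \<nu> :: "'i \<Rightarrow> real measure" and f :: "('i \<Rightarrow> real) \<Rightarrow> real"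
  assumes J: "finite J"
    and p\<mu>: "\<And>k. prob_space (\<mu> k)" and s\<mu>: "\<And>k. sets (\<mu> k) = sets borel"
    and p\<nu>: "\<And>k. prob_space (\<nu> k)" and s\<nu>: "\<And>k. sets (\<nu> k) = sets borel"
    and i\<mu>: "\<And>k. k \<in> J \<Longrightarrow> integrable (\<mu> k) (\<lambda>y. y)"
    and i\<nu>: "\<And>k. k \<in> J \<Longrightarrow> integrable (\<nu> k) (\<lambda>y. y)"
    and icx: "\<And>k h. k \<in> J \<Longrightarrow> convex_on UNIV h \<Longrightarrow> mono h \<Longrightarrow> ext_expect (\<nu> k) h \<le> ext_expect (\<mu> k) h"
    and fm: "f \<in> borel_measurable (PiM J (\<lambda>_. borel))"
    and fc: "\<And>z i. convex_on UNIV (\<lambda>y. f (z(i:=y)))" "\<And>z i. mono (\<lambda>y. f (z(i:=y)))"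
    and fb: "\<And>z. -(C + K * (\<Sum>k\<in>J. \<bar>z k\<bar>)) \<le> f z" and K: "K \<ge> 0"
  shows "ext_expect (PiM J \<nu>) f \<le> ext_expect (PiM J \<mu>) f"
proof -
  define mix where "mix S k = (if k \<in> S then \<mu> k else \<nu> k)" for S k
  have pm: "prob_space (mix S k)" for S k by (simp add: mix_def p\<mu> p\<nu>)
  have sm: "sets (mix S k) = sets borel" for S k by (simp add: mix_def s\<mu> s\<nu>)
  have im: "k \<in> J \<Longrightarrow> integrable (mix S k) (\<lambda>y. y)" for S k by (simp add: mix_def i\<mu> i\<nu>)
  have main: "finite S \<Longrightarrow> S \<subseteq> J \<Longrightarrow> ext_expect (PiM J \<nu>) f \<le> ext_expect (PiM J (mix S)) f" for S
  proof (induction S rule: finite_induct)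
    case empty
    then show ?case by (simp add: mix_def)
  next
    case (insert i S)
    have "ext_expect (PiM J (mix S)) f \<le> ext_expect (PiM J (mix (insert i S))) f"
    proof (rule icx_step[OF J _ pm sm pm sm _ im im _ fm fc fb K])
      show "i \<in> J" using insert by auto
      show "\<And>k. k \<noteq> i \<Longrightarrow> mix (insert i S) k = mix S k" by (simp add: mix_def)
      show "\<And>h. convex_on UNIV h \<Longrightarrow> mono h \<Longrightarrow> ext_expect (mix S i) h \<le> ext_expect (mix (insert i S) i) h"
        using insert icx by (simp add: mix_def)
    qed
    then show ?case using insert by (meson insert_subset order_trans)
  qed
  have "PiM J (mix J) = PiM J \<mu>" by (rule PiM_cong) (simp_all add: mix_def)
  then show ?thesis using main[OF J order_refl] by simp
qed

definition Gf :: "real \<Rightarrow> real \<Rightarrow> (real \<times> 'x) list \<Rightarrow> 'k \<Rightarrow> (('x \<times> 'a::finite) + 'k \<Rightarrow> real) \<Rightarrow> real" where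
  "Gf \<alpha> \<beta> L p z = \<alpha> + \<beta> * (\<Sum>j<length L. fst (L!j) + Max (range (\<lambda>b. z (Inl (snd (L!j), b))))) + z (Inr p)"

lemma upd_convex: "convex_on UNIV (\<lambda>y::real. (z(k:=y)) q)" "mono (\<lambda>y::real. (z(k:=y)) q)"
  by (cases "k = q"; simp add: convex_on_const convex_on_def monoI)+

lemma convex_sum_fun:
  fixes g :: "'j \<Rightarrow> real \<Rightarrow> real"
  assumes "finite S" "\<And>j. j \<in> S \<Longrightarrow> convex_on UNIV (g j)"
  shows "convex_on UNIV (\<lambda>y. \<Sum>j\<in>S. g j y)"
  using assms by (induction S rule: finite_induct) (auto simp: convex_on_const)

lemma mono_sum_fun:
  fixes g :: "'j \<Rightarrow> real \<Rightarrow> real"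
  assumes "\<And>j. j \<in> S \<Longrightarrow> mono (g j)"
  shows "mono (\<lambda>y. \<Sum>j\<in>S. g j y)"
  using assms by (auto simp: mono_def intro!: sum_mono)

lemma Gf_coord:
  assumes "\<beta> \<ge> 0"
  shows "convex_on UNIV (\<lambda>y. Gf \<alpha> \<beta> L p (z(k:=y)))" "mono (\<lambda>y. Gf \<alpha> \<beta> L p (z(k:=y)))"
proof -
  have c1: "convex_on UNIV (\<lambda>y. fst (L!j) + Max (range (\<lambda>b. (z(k:=y)) (Inl (snd (L!j), b)))))" for j
    by (intro convex_on_add convex_Max_range upd_convex) (simp add: convex_on_const)
  have m1: "mono (\<lambda>y. fst (L!j) + Max (range (\<lambda>b. (z(k:=y)) (Inl (snd (L!j), b)))))" for j
    using mono_Max_range[of "\<lambda>b y. (z(k:=y)) (Inl (snd (L!j), b))", OF upd_convex(2)]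
    by (simp add: mono_def)
  show "convex_on UNIV (\<lambda>y. Gf \<alpha> \<beta> L p (z(k:=y)))"
    unfolding Gf_def
    by (intro convex_on_add convex_on_cmul assms convex_sum_fun c1 upd_convex) (simp_all add: convex_on_const)
  have "mono (\<lambda>y. \<Sum>j<length L. fst (L!j) + Max (range (\<lambda>b. (z(k:=y)) (Inl (snd (L!j), b)))))"
    by (rule mono_sum_fun) (rule m1)
  then show "mono (\<lambda>y. Gf \<alpha> \<beta> L p (z(k:=y)))"
    using upd_convex(2)[of z k "Inr p"] assms unfolding Gf_def mono_def
    by (smt (verit, best) mult_left_mono)
qed

lemma Gf_bound:
  fixes z :: "('x \<times> 'a::finite) + 'k \<Rightarrow> real"
  assumes "\<beta> \<ge> 0" "finite J" "\<And>y b. Inl (y, b) \<in> J" "Inr p \<in> J"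
  shows "\<bar>Gf \<alpha> \<beta> L p z\<bar> \<le> \<bar>\<alpha>\<bar> + \<beta> * (\<Sum>j<length L. \<bar>fst (L!j)\<bar>) + (\<beta> * length L + 1) * (\<Sum>k\<in>J. \<bar>z k\<bar>)"
proof -
  let ?S = "\<Sum>k\<in>J. \<bar>z k\<bar>"
  have le: "\<bar>z q\<bar> \<le> ?S" if "q \<in> J" for q
    using assms(2) that by (intro member_le_sum) auto
  have M: "\<bar>Max (range (\<lambda>b. z (Inl (y, b))))\<bar> \<le> ?S" for y
  proof -
    have "Max (range (\<lambda>b. z (Inl (y, b)))) \<in> range (\<lambda>b. z (Inl (y, b)))" by (intro Max_in) auto
    then obtain b where "Max (range (\<lambda>b. z (Inl (y, b)))) = z (Inl (y, b))" by blast
    then show ?thesis using le[OF assms(3)] by simp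
  qed
  have "\<bar>\<Sum>j<length L. fst (L!j) + Max (range (\<lambda>b. z (Inl (snd (L!j), b))))\<bar>
      \<le> (\<Sum>j<length L. \<bar>fst (L!j) + Max (range (\<lambda>b. z (Inl (snd (L!j), b))))\<bar>)" by (rule sum_abs)
  also have "\<dots> \<le> (\<Sum>j<length L. \<bar>fst (L!j)\<bar> + ?S)"
  proof (intro sum_mono)
    fix j
    show "\<bar>fst (L!j) + Max (range (\<lambda>b. z (Inl (snd (L!j), b))))\<bar> \<le> \<bar>fst (L!j)\<bar> + ?S"
      using M[of "snd (L!j)"] abs_triangle_ineq[of "fst (L!j)" "Max (range (\<lambda>b. z (Inl (snd (L!j), b))))"]
      by linarith
  qed
  also have "\<dots> = (\<Sum>j<length L. \<bar>fst (L!j)\<bar>) + length L * ?S" by (simp add: sum.distrib)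
  finally have s: "\<bar>\<Sum>j<length L. fst (L!j) + Max (range (\<lambda>b. z (Inl (snd (L!j), b))))\<bar>
      \<le> (\<Sum>j<length L. \<bar>fst (L!j)\<bar>) + length L * ?S" .
  have "\<bar>Gf \<alpha> \<beta> L p z\<bar> \<le> \<bar>\<alpha>\<bar> + \<beta> * \<bar>\<Sum>j<length L. fst (L!j) + Max (range (\<lambda>b. z (Inl (snd (L!j), b))))\<bar> + \<bar>z (Inr p)\<bar>"
  proof -
    have gen: "\<bar>\<alpha> + \<beta> * T + e\<bar> \<le> \<bar>\<alpha>\<bar> + \<beta> * \<bar>T\<bar> + \<bar>e\<bar>" for T e :: real
      using assms(1) abs_triangle_ineq[of "\<alpha> + \<beta>*T" e] abs_triangle_ineq[of \<alpha> "\<beta>*T"] abs_mult[of \<beta> T]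
      by simp
    show ?thesis unfolding Gf_def by (rule gen)
  qed
  also have "\<dots> \<le> \<bar>\<alpha>\<bar> + \<beta> * ((\<Sum>j<length L. \<bar>fst (L!j)\<bar>) + length L * ?S) + ?S"
    using s le[OF assms(4)] assms(1) by (intro add_mono mult_left_mono) auto
  also have "\<dots> = \<bar>\<alpha>\<bar> + \<beta> * (\<Sum>j<length L. \<bar>fst (L!j)\<bar>) + (\<beta> * length L + 1) * ?S"
    by (simp add: algebra_simps)
  finally show ?thesis .
qed

lemma Gf_restrict:
  assumes "\<And>y b. Inl (y, b) \<in> J" "Inr p \<in> J"
  shows "Gf \<alpha> \<beta> L p (restrict z J) = Gf \<alpha> \<beta> L p z"
  using assms by (simp add: Gf_def)

lemma Gf_meas:
  assumes "\<And>y b. Inl (y, b) \<in> J" "Inr p \<in> J"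
  shows "Gf \<alpha> \<beta> L p \<in> borel_measurable (PiM J (\<lambda>_. borel))"
proof -
  have m: "(\<lambda>z. z q) \<in> borel_measurable (PiM J (\<lambda>_. borel :: real measure))" if "q \<in> J" for q
    using that by simp
  have mx: "(\<lambda>z. Max ((\<lambda>b. z (Inl (y, b))) ` UNIV)) \<in> borel_measurable (PiM J (\<lambda>_. borel :: real measure))" for y
    by (rule borel_measurable_Max) (auto intro: m assms)
  show ?thesis unfolding Gf_def
    using mx m[OF assms(2)] by measurable
qed

lemma sum_mset_image_nth:
  fixes g :: "'b \<Rightarrow> real"
  shows "sum_mset (image_mset g (mset L)) = (\<Sum>j<length L. g (L!j))"
proof -
  have "sum_mset (image_mset g (mset L)) = sum_list (map g L)" by (metis mset_map sum_mset_sum_list)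
  also have "\<dots> = (\<Sum>j<length L. map g L ! j)" by (simp add: sum_list_sum_nth atLeast0LessThan)
  also have "\<dots> = (\<Sum>j<length L. g (L!j))" by (rule sum.cong) simp_all
  finally show ?thesis .
qed

theorem mainTheorem5:
  fixes M :: "'w measure"
    and hx :: "nat \<Rightarrow> nat \<Rightarrow> 'x::finite" and ha :: "nat \<Rightarrow> nat \<Rightarrow> 'a::finite"
    and hr :: "nat \<Rightarrow> nat \<Rightarrow> real"
    and l H :: nat and lam v :: real and th :: "nat \<Rightarrow> 'x \<Rightarrow> 'a \<Rightarrow> real"
    and w :: "nat \<Rightarrow> 'x \<Rightarrow> 'a \<Rightarrow> 'w \<Rightarrow> real"
    and Q1 Q2 :: "'w \<Rightarrow> 'x \<Rightarrow> 'a \<Rightarrow> real"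
  assumes "prob_space M"
    and "v > 0" and "lam > 0"
    and rewards: "\<forall>k t. hr k t \<in> {0, 1}"
    and w_normal: "\<forall>t<H. \<forall>x a. distributed M lborel (w t x a)
                 (normal_density 0 (sqrt (rlsvi_sigma2 lam v (size (hist_data hx ha hr l t x a)))))"
    and w_indep: "prob_space.indep_vars M (\<lambda>_. borel) (\<lambda>(t, x, a). w t x a) ({..<H} \<times> UNIV)"
    and Q1_indep: "prob_space.indep_vars M (\<lambda>_. borel)
           (\<lambda>i \<omega>. case i of Inl (x, a) \<Rightarrow> Q1 \<omega> x a | Inr (t, x, a) \<Rightarrow> w t x a \<omega>)
           (UNIV <+> ({..<H} \<times> UNIV))"
    and Q2_indep: "prob_space.indep_vars M (\<lambda>_. borel)
           (\<lambda>i \<omega>. case i of Inl (x, a) \<Rightarrow> Q2 \<omega> x a | Inr (t, x, a) \<Rightarrow> w t x a \<omega>)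
           (UNIV <+> ({..<H} \<times> UNIV))"
    and SO: "\<forall>x a. stoch_opt M (\<lambda>\<omega>. Q1 \<omega> x a) (\<lambda>\<omega>. Q2 \<omega> x a)"
  shows "\<forall>t<H. \<forall>x a.
           stoch_opt M
             (\<lambda>\<omega>. rlsvi_F lam v th (hist_data hx ha hr l) (\<lambda>t x a. w t x a \<omega>) t (Q1 \<omega>) x a)
             (\<lambda>\<omega>. rlsvi_F lam v th (hist_data hx ha hr l) (\<lambda>t x a. w t x a \<omega>) t (Q2 \<omega>) x a)"
proof (intro allI impI)
  interpret prob_space M by fact
  fix t x a assume tH: "t < H"
  define J where "J = (UNIV :: ('x \<times> 'a) set) <+> ({..<H} \<times> (UNIV :: ('x \<times> 'a) set))"
  define X1 where "X1 = (\<lambda>i \<omega>. case i of Inl (x, a) \<Rightarrow> Q1 \<omega> x a | Inr (t, x, a) \<Rightarrow> w t x a \<omega>)"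
  define X2 where "X2 = (\<lambda>i \<omega>. case i of Inl (x, a) \<Rightarrow> Q2 \<omega> x a | Inr (t, x, a) \<Rightarrow> w t x a \<omega>)"
  have ind1: "indep_vars (\<lambda>_. borel) X1 J" using Q1_indep unfolding X1_def J_def .
  have ind2: "indep_vars (\<lambda>_. borel) X2 J" using Q2_indep unfolding X2_def J_def .
  have Jfin: "finite J" unfolding J_def by (intro finite_Plus) auto
  have memb: "\<And>y b. Inl (y, b) \<in> J" "Inr (t, x, a) \<in> J" using tH by (auto simp: J_def)
  have Jne: "J \<noteq> {}" using memb by auto
  define L where "L = map (\<lambda>k. (hr k (Suc t), hx k (Suc t))) (filter (\<lambda>k. hx k t = x \<and> ha k t = a) [1..<l])"
  define s2 where "s2 = rlsvi_sigma2 lam v (length L)"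
  have s2pos: "s2 > 0" using \<open>v > 0\<close> \<open>lam > 0\<close> by (simp add: s2_def rlsvi_sigma2_def add_pos_nonneg)
  define \<alpha> where "\<alpha> = s2 * (th t x a / lam)"
  define \<beta> where "\<beta> = s2 * (1 / v)"
  have \<beta>0: "\<beta> \<ge> 0" using s2pos \<open>v > 0\<close> by (simp add: \<beta>_def)
  have Feq: "rlsvi_F lam v th (hist_data hx ha hr l) (\<lambda>t x a. w t x a \<omega>) t Q x a
        = Gf \<alpha> \<beta> L (t, x, a) (\<lambda>i. case i of Inl (x, a) \<Rightarrow> Q x a | Inr (t, x, a) \<Rightarrow> w t x a \<omega>)" for Q \<omega>
  proof -
    have hd: "hist_data hx ha hr l t x a = mset L" unfolding hist_data_def L_def by (rule refl)
    have sm: "sum_mset (image_mset (\<lambda>(r, x'). r + Max (range (Q x'))) (mset L))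
        = (\<Sum>j<length L. fst (L!j) + Max (range (\<lambda>b. Q (snd (L!j)) b)))"
      by (simp only: sum_mset_image_nth case_prod_beta)
    have sz: "size (mset L) = length L" by (rule size_mset)
    show ?thesis
      unfolding rlsvi_F_def hd Gf_def \<alpha>_def \<beta>_def s2_def sm sz by (simp add: algebra_simps)
  qed
  define G where "G = (Gf \<alpha> \<beta> L (t, x, a) :: ('x \<times> 'a + nat \<times> 'x \<times> 'a \<Rightarrow> real) \<Rightarrow> real)"
  have F1: "(\<lambda>\<omega>. rlsvi_F lam v th (hist_data hx ha hr l) (\<lambda>t x a. w t x a \<omega>) t (Q1 \<omega>) x a)
      = (\<lambda>\<omega>. G (\<lambda>i. X1 i \<omega>))" unfolding G_def X1_def by (simp add: Feq)
  have F2: "(\<lambda>\<omega>. rlsvi_F lam v th (hist_data hx ha hr l) (\<lambda>t x a. w t x a \<omega>) t (Q2 \<omega>) x a)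
      = (\<lambda>\<omega>. G (\<lambda>i. X2 i \<omega>))" unfolding G_def X2_def by (simp add: Feq)
  have wm: "w t' y b \<in> borel_measurable M" if "t' < H" for t' y b
  proof -
    have "w t' y b \<in> measurable M lborel" using w_normal that distributed_measurable by blast
    then show ?thesis by (simp add: measurable_cong_sets[OF refl sets_lborel])
  qed
  have wi: "integrable M (w t' y b)" if "t' < H" for t' y b
  proof -
    have d: "distributed M lborel (w t' y b) (\<lambda>z. ennreal (normal_density 0 (sqrt (rlsvi_sigma2 lam v (size (hist_data hx ha hr l t' y b)))) z))"
      using w_normal that by blast
    show ?thesis by (rule distributed_integrable_var[OF d normal_density_nonneg integrable_normal_moment_nz_1])
      (use \<open>v > 0\<close> \<open>lam > 0\<close> in \<open>simp add: rlsvi_sigma2_def add_pos_nonneg\<close>)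
  qed
  have SO1: "\<And>y b. (\<lambda>\<omega>. Q1 \<omega> y b) \<in> borel_measurable M \<and> (\<lambda>\<omega>. Q2 \<omega> y b) \<in> borel_measurable M \<and>
        integrable M (\<lambda>\<omega>. Q1 \<omega> y b) \<and> integrable M (\<lambda>\<omega>. Q2 \<omega> y b)"
    using SO by (simp add: stoch_opt_def)
  have X1m: "X1 i \<in> borel_measurable M" if "i \<in> J" for i
    using that SO1 wm by (auto simp: X1_def J_def split: sum.split)
  have X2m: "X2 i \<in> borel_measurable M" if "i \<in> J" for i
    using that SO1 wm by (auto simp: X2_def J_def split: sum.split)
  have X1i: "integrable M (X1 i)" if "i \<in> J" for i
    using that SO1 wi by (auto simp: X1_def J_def split: sum.split)
  have X2i: "integrable M (X2 i)" if "i \<in> J" for i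
    using that SO1 wi by (auto simp: X2_def J_def split: sum.split)
  define \<mu> where "\<mu> i = (if i \<in> J then distr M borel (X1 i) else return borel 0)" for i
  define \<nu> where "\<nu> i = (if i \<in> J then distr M borel (X2 i) else return borel 0)" for i
  have p\<mu>: "prob_space (\<mu> k)" for k
    by (simp add: \<mu>_def X1m prob_space_distr prob_space_return)
  have p\<nu>: "prob_space (\<nu> k)" for k
    by (simp add: \<nu>_def X2m prob_space_distr prob_space_return)
  have s\<mu>: "sets (\<mu> k) = sets borel" for k by (simp add: \<mu>_def)
  have s\<nu>: "sets (\<nu> k) = sets borel" for k by (simp add: \<nu>_def)
  have i\<mu>: "integrable (\<mu> k) (\<lambda>y. y)" if "k \<in> J" for k
    using that X1m X1i by (simp add: \<mu>_def integrable_distr_eq)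
  have i\<nu>: "integrable (\<nu> k) (\<lambda>y. y)" if "k \<in> J" for k
    using that X2m X2i by (simp add: \<nu>_def integrable_distr_eq)
  have hmeas: "h \<in> borel_measurable borel" if "convex_on UNIV h" for h :: "real \<Rightarrow> real"
    using convex_on_continuous[OF open_UNIV that] by (rule borel_measurable_continuous_onI)
  have icx: "ext_expect (\<nu> k) h \<le> ext_expect (\<mu> k) h"
    if "k \<in> J" "convex_on UNIV h" "mono h" for k h
  proof (cases k)
    case (Inl p)
    obtain y b where p: "p = (y, b)" by (cases p)
    have hm: "h \<in> borel_measurable borel" using hmeas that(2) .
    have "ext_expect (\<nu> k) h = ext_expect M (h \<circ> (\<lambda>\<omega>. Q2 \<omega> y b))"
      using that Inl p ext_expect_distr[OF conjunct1[OF conjunct2[OF SO1[of y b]]] hm] by (simp add: \<nu>_def X2_def)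
    also have "\<dots> \<le> ext_expect M (h \<circ> (\<lambda>\<omega>. Q1 \<omega> y b))"
      using SO that by (simp add: stoch_opt_def)
    also have "\<dots> = ext_expect (\<mu> k) h"
      using that Inl p ext_expect_distr[OF conjunct1[OF SO1[of y b]] hm] by (simp add: \<mu>_def X1_def)
    finally show ?thesis .
  next
    case (Inr q)
    then have "\<mu> k = \<nu> k" by (simp add: \<mu>_def \<nu>_def X1_def X2_def)
    then show ?thesis by simp
  qed
  have Gm: "G \<in> borel_measurable (PiM J (\<lambda>_. borel))" unfolding G_def by (rule Gf_meas[OF memb])
  define c1 where "c1 = \<bar>\<alpha>\<bar> + \<beta> * (\<Sum>j<length L. \<bar>fst (L!j)\<bar>)"
  define K1 where "K1 = \<beta> * length L + 1"
  have K1: "K1 \<ge> 0" using \<beta>0 by (simp add: K1_def)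
  have Gb: "\<bar>G z\<bar> \<le> c1 + K1 * (\<Sum>k\<in>J. \<bar>z k\<bar>)" for z
    unfolding G_def c1_def K1_def by (rule Gf_bound[OF \<beta>0 Jfin memb])
  have Gr: "G (restrict z J) = G z" for z unfolding G_def by (rule Gf_restrict[OF memb])
  have Gc: "convex_on UNIV (\<lambda>y. G (z(k:=y)))" "mono (\<lambda>y. G (z(k:=y)))" for z k
    unfolding G_def by (rule Gf_coord[OF \<beta>0])+
  have link: "ext_expect M (u \<circ> (\<lambda>\<omega>. G (\<lambda>i. X i \<omega>))) = ext_expect (PiM J (\<lambda>i. distr M borel (X i))) (u \<circ> G)"
    if Xm: "\<And>i. i \<in> J \<Longrightarrow> X i \<in> borel_measurable M" and Xi: "indep_vars (\<lambda>_. borel) X J"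
      and um: "u \<circ> G \<in> borel_measurable (PiM J (\<lambda>_. borel))" for X u
  proof -
    have Xv: "(\<lambda>\<omega>. \<lambda>i\<in>J. X i \<omega>) \<in> measurable M (PiM J (\<lambda>_. borel))"
      by (intro measurable_restrict Xm)
    have "distr M (PiM J (\<lambda>_. borel)) (\<lambda>\<omega>. \<lambda>i\<in>J. X i \<omega>) = PiM J (\<lambda>i. distr M borel (X i))"
      using indep_vars_iff_distr_eq_PiM'[OF Jne, where M'="\<lambda>_. borel" and X=X] Xm Xi by simp
    then have "ext_expect (PiM J (\<lambda>i. distr M borel (X i))) (u \<circ> G)
        = ext_expect M ((u \<circ> G) \<circ> (\<lambda>\<omega>. \<lambda>i\<in>J. X i \<omega>))"
      using ext_expect_distr[OF Xv um] by simp
    also have "(u \<circ> G) \<circ> (\<lambda>\<omega>. \<lambda>i\<in>J. X i \<omega>) = u \<circ> (\<lambda>\<omega>. G (\<lambda>i. X i \<omega>))"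
      by (simp add: comp_def Gr)
    finally show ?thesis by (simp add: comp_def)
  qed
  have FX: "(\<lambda>\<omega>. G (\<lambda>i. X i \<omega>)) \<in> borel_measurable M \<and> integrable M (\<lambda>\<omega>. G (\<lambda>i. X i \<omega>))"
    if Xm: "\<And>i. i \<in> J \<Longrightarrow> X i \<in> borel_measurable M" and Xint: "\<And>i. i \<in> J \<Longrightarrow> integrable M (X i)" for X
  proof
    have Xv: "(\<lambda>\<omega>. \<lambda>i\<in>J. X i \<omega>) \<in> measurable M (PiM J (\<lambda>_. borel))"
      by (intro measurable_restrict Xm)
    have "(\<lambda>\<omega>. G (\<lambda>i\<in>J. X i \<omega>)) \<in> borel_measurable M"
      using measurable_comp[OF Xv Gm] by (simp add: comp_def)
    then show m: "(\<lambda>\<omega>. G (\<lambda>i. X i \<omega>)) \<in> borel_measurable M" by (simp add: Gr)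
    have ib: "integrable M (\<lambda>\<omega>. c1 + K1 * (\<Sum>k\<in>J. \<bar>X k \<omega>\<bar>))"
    proof -
      have "integrable M (\<lambda>\<omega>. \<bar>X k \<omega>\<bar>)" if "k \<in> J" for k using Xint[OF that] by (rule integrable_abs)
      then have "integrable M (\<lambda>\<omega>. (\<Sum>k\<in>J. \<bar>X k \<omega>\<bar>))"
        using Bochner_Integration.integrable_sum[where I=J and f="\<lambda>k \<omega>. \<bar>X k \<omega>\<bar>"] by blast
      then show ?thesis by (intro Bochner_Integration.integrable_add integrable_mult_right) simp_all
    qed
    show "integrable M (\<lambda>\<omega>. G (\<lambda>i. X i \<omega>))"
    proof (rule Bochner_Integration.integrable_bound[OF ib m])
      show "AE \<omega> in M. norm (G (\<lambda>i. X i \<omega>)) \<le> norm (c1 + K1 * (\<Sum>k\<in>J. \<bar>X k \<omega>\<bar>))"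
        using Gb by (auto intro!: AE_I2 order_trans[OF _ abs_ge_self])
    qed
  qed
  show "stoch_opt M
             (\<lambda>\<omega>. rlsvi_F lam v th (hist_data hx ha hr l) (\<lambda>t x a. w t x a \<omega>) t (Q1 \<omega>) x a)
             (\<lambda>\<omega>. rlsvi_F lam v th (hist_data hx ha hr l) (\<lambda>t x a. w t x a \<omega>) t (Q2 \<omega>) x a)"
    unfolding F1 F2 stoch_opt_def
  proof (intro conjI allI impI)
    show "(\<lambda>\<omega>. G (\<lambda>i. X1 i \<omega>)) \<in> borel_measurable M" "integrable M (\<lambda>\<omega>. G (\<lambda>i. X1 i \<omega>))"
      using FX[OF X1m X1i] by auto
    show "(\<lambda>\<omega>. G (\<lambda>i. X2 i \<omega>)) \<in> borel_measurable M" "integrable M (\<lambda>\<omega>. G (\<lambda>i. X2 i \<omega>))"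
      using FX[OF X2m X2i] by auto
    fix u :: "real \<Rightarrow> real" assume u: "convex_on UNIV u \<and> mono u"
    have um: "u \<circ> G \<in> borel_measurable (PiM J (\<lambda>_. borel))"
      using measurable_comp[OF Gm hmeas] u by simp
    have fc: "convex_on UNIV (\<lambda>y. (u \<circ> G) (z(k:=y)))" "mono (\<lambda>y. (u \<circ> G) (z(k:=y)))" for z k
      using convex_mono_comp[of u "\<lambda>y. G (z(k:=y))", OF _ _ Gc(1) Gc(2)] u by (simp_all add: comp_def)
    define Cu where "Cu = \<bar>u (-1)\<bar> + \<bar>u 0\<bar>"
    define Bu where "Bu = u 0 - u (-1)"
    have Bu: "Bu \<ge> 0" using u by (simp add: Bu_def monoD)
    have fb: "-((Cu + Bu * c1) + (Bu * K1) * (\<Sum>k\<in>J. \<bar>z k\<bar>)) \<le> (u \<circ> G) z" for z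
    proof -
      have "-(Cu + Bu * \<bar>G z\<bar>) \<le> u (G z)"
        using convex_mono_lower[of u "G z"] u by (simp add: Cu_def Bu_def)
      moreover have "Bu * \<bar>G z\<bar> \<le> Bu * (c1 + K1 * (\<Sum>k\<in>J. \<bar>z k\<bar>))"
        using Gb[of z] Bu by (rule mult_left_mono)
      ultimately show ?thesis by (simp add: algebra_simps)
    qed
    have PM1: "PiM J \<mu> = PiM J (\<lambda>i. distr M borel (X1 i))" by (rule PiM_cong) (simp_all add: \<mu>_def)
    have PM2: "PiM J \<nu> = PiM J (\<lambda>i. distr M borel (X2 i))" by (rule PiM_cong) (simp_all add: \<nu>_def)
    have "ext_expect (PiM J \<nu>) (u \<circ> G) \<le> ext_expect (PiM J \<mu>) (u \<circ> G)"
      by (rule icx_product[OF Jfin p\<mu> s\<mu> p\<nu> s\<nu> i\<mu> i\<nu> icx um fc fb]) (use Bu K1 u in auto)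
    moreover have "ext_expect M (u \<circ> (\<lambda>\<omega>. G (\<lambda>i. X1 i \<omega>))) = ext_expect (PiM J \<mu>) (u \<circ> G)"
      using link[OF X1m ind1 um] PM1 by simp
    moreover have "ext_expect M (u \<circ> (\<lambda>\<omega>. G (\<lambda>i. X2 i \<omega>))) = ext_expect (PiM J \<nu>) (u \<circ> G)"
      using link[OF X2m ind2 um] PM2 by simp
    ultimately show "ext_expect M (u \<circ> (\<lambda>\<omega>. G (\<lambda>i. X2 i \<omega>))) \<le> ext_expect M (u \<circ> (\<lambda>\<omega>. G (\<lambda>i. X1 i \<omega>)))"
      by simp
  qed
qed

end
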